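(* Let $p$ be an odd prime, $G$ a finite group with a Sylow $p$-subgroup $P$, and $H$ a normal subgroup of $G$ such that $G = PH$. Set $Q = P \cap H$. Let $P$ act by conjugation on $N_H(Q)/QC_H(Q)$. Then $C_{N_H(Q)/QC_H(Q)}(P) = N_H(P)C_H(Q)/QC_H(Q)$, and the inclusion $N_H(P) \subseteq N_G(P)$ induces a well-defined surjective group homomorphism $$C_{N_H(Q)/QC_H(Q)}(P) \to N_G(P)/PC_G(P)$$ (sending the coset of $n \in N_H(P)$ to $nPC_G(P)$) whose kernel is a $p$-group.
   Context: $C_X(P)$ for a group $X$ on which $P$ acts denotes the subgroup of $P$-fixed elements. *)

theory Defs
  imports "HOL-Algebra.Algebra" "HOL-Computational_Algebra.Primes"
begin

definition centralizer :: "('a, 'b) monoid_scheme \<Rightarrow> 'a set \<Rightarrow> 'a set" where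
  "centralizer G A = {g \<in> carrier G. \<forall>a\<in>A. g \<otimes>\<^bsub>G\<^esub> a = a \<otimes>\<^bsub>G\<^esub> g}"

definition sylow_subgroup :: "('a, 'b) monoid_scheme \<Rightarrow> nat \<Rightarrow> 'a set \<Rightarrow> bool" where
  "sylow_subgroup G p P \<longleftrightarrow> subgroup P G \<and> card P = p ^ multiplicity p (card (carrier G))"

definition conj_fixed :: "('a, 'b) monoid_scheme \<Rightarrow> 'a set \<Rightarrow> 'a set set \<Rightarrow> 'a set set" where
  "conj_fixed G P S = {Y \<in> S. \<forall>x\<in>P. r_coset G (l_coset G x Y) (m_inv G x) = Y}"

end

theory Submission
  imports Defs "HOL-Algebra.Multiplicative_Group"
begin


context group begin

lemma inv_cancel_left [simp]: "x \<in> carrier G \<Longrightarrow> y \<in> carrier G \<Longrightarrow> inv x \<otimes> (x \<otimes> y) = y"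
  by (simp add: m_assoc[symmetric])

lemma cancel_inv_left [simp]: "x \<in> carrier G \<Longrightarrow> y \<in> carrier G \<Longrightarrow> x \<otimes> (inv x \<otimes> y) = y"
  by (simp add: m_assoc[symmetric])

lemma conj_set:
  assumes "A \<subseteq> carrier G" "g \<in> carrier G"
  shows "g <# A #> inv g = (\<lambda>a. g \<otimes> a \<otimes> inv g) ` A"
  using assms unfolding l_coset_def r_coset_def by auto

lemma normalizer_iff:
  assumes "A \<subseteq> carrier G"
  shows "g \<in> normalizer G A \<longleftrightarrow> g \<in> carrier G \<and> (\<lambda>a. g \<otimes> a \<otimes> inv g) ` A = A"
proof -
  have "g \<in> normalizer G A \<longleftrightarrow> g \<in> carrier G \<and> g <# A #> inv g = A"
    using assms unfolding normalizer_def stabilizer_def by simp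
  thus ?thesis using conj_set[OF assms] by auto
qed

lemma conj_inj:
  assumes "a \<in> carrier G" "b \<in> carrier G" "g \<in> carrier G"
    and "g \<otimes> a \<otimes> inv g = g \<otimes> b \<otimes> inv g"
  shows "a = b"
proof -
  have "a = inv g \<otimes> (g \<otimes> a \<otimes> inv g) \<otimes> g" using assms(1,3) by (simp add: m_assoc)
  also have "\<dots> = inv g \<otimes> (g \<otimes> b \<otimes> inv g) \<otimes> g" by (simp only: assms(4))
  also have "\<dots> = b" using assms(2,3) by (simp add: m_assoc)
  finally show ?thesis .
qed

lemma normalizerI_fin:
  assumes "finite A" "A \<subseteq> carrier G" "g \<in> carrier G"
    and "\<And>a. a \<in> A \<Longrightarrow> g \<otimes> a \<otimes> inv g \<in> A"
  shows "g \<in> normalizer G A"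
proof -
  have inj: "inj_on (\<lambda>a. g \<otimes> a \<otimes> inv g) A"
    by (rule inj_onI) (use assms(2,3) conj_inj in blast)
  have sub: "(\<lambda>a. g \<otimes> a \<otimes> inv g) ` A \<subseteq> A" using assms(4) by auto
  have "card ((\<lambda>a. g \<otimes> a \<otimes> inv g) ` A) = card A" using card_image[OF inj] .
  hence "(\<lambda>a. g \<otimes> a \<otimes> inv g) ` A = A" using card_subset_eq[OF assms(1) sub] by simp
  thus ?thesis using normalizer_iff[OF assms(2)] assms(3) by simp
qed

lemma normalizerD:
  assumes "A \<subseteq> carrier G" "g \<in> normalizer G A" "a \<in> A"
  shows "g \<otimes> a \<otimes> inv g \<in> A"
proof -
  have "(\<lambda>a. g \<otimes> a \<otimes> inv g) ` A = A" using normalizer_iff[OF assms(1)] assms(2) by simp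
  moreover have "g \<otimes> a \<otimes> inv g \<in> (\<lambda>a. g \<otimes> a \<otimes> inv g) ` A" by (rule imageI[OF assms(3)])
  ultimately show ?thesis by simp
qed

lemma normalizer_carrier:
  assumes "A \<subseteq> carrier G" "g \<in> normalizer G A"
  shows "g \<in> carrier G"
  using normalizer_iff[OF assms(1)] assms(2) by simp

lemma normalizerD':
  assumes "A \<subseteq> carrier G" "g \<in> normalizer G A" "a \<in> A"
  shows "inv g \<otimes> a \<otimes> g \<in> A"
proof -
  have "inv g \<in> normalizer G A"
    by (rule subgroup.m_inv_closed[OF normalizer_imp_subgroup[OF assms(1)] assms(2)])
  from normalizerD[OF assms(1) this assms(3)] show ?thesis
    using inv_inv[OF normalizer_carrier[OF assms(1,2)]] by (simp only:)
qed

lemma centralizer_subgroup: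
  assumes "A \<subseteq> carrier G"
  shows "subgroup (centralizer G A) G"
proof (rule subgroupI)
  show "centralizer G A \<subseteq> carrier G" unfolding centralizer_def by auto
  have "\<one> \<in> centralizer G A" unfolding centralizer_def using assms by auto
  thus "centralizer G A \<noteq> {}" by auto
next
  fix c assume c: "c \<in> centralizer G A"
  show "inv c \<in> centralizer G A" unfolding centralizer_def
  proof (intro CollectI conjI ballI)
    show "inv c \<in> carrier G" using c unfolding centralizer_def by auto
    fix a assume a: "a \<in> A"
    have cG: "c \<in> carrier G" and ca: "c \<otimes> a = a \<otimes> c" using c a unfolding centralizer_def by auto
    have aG: "a \<in> carrier G" using a assms by auto
    have "inv c \<otimes> a = inv c \<otimes> (a \<otimes> c) \<otimes> inv c" using cG aG by (simp add: m_assoc)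
    also have "\<dots> = inv c \<otimes> (c \<otimes> a) \<otimes> inv c" using ca by simp
    also have "\<dots> = a \<otimes> inv c" using cG aG by (simp add: m_assoc[symmetric])
    finally show "inv c \<otimes> a = a \<otimes> inv c" .
  qed
next
  fix c d assume c: "c \<in> centralizer G A" and d: "d \<in> centralizer G A"
  show "c \<otimes> d \<in> centralizer G A" unfolding centralizer_def
  proof (intro CollectI conjI ballI)
    show "c \<otimes> d \<in> carrier G" using c d unfolding centralizer_def by auto
    fix a assume a: "a \<in> A"
    have cG: "c \<in> carrier G" and ca: "c \<otimes> a = a \<otimes> c" using c a unfolding centralizer_def by auto
    have dG: "d \<in> carrier G" and da: "d \<otimes> a = a \<otimes> d" using d a unfolding centralizer_def by auto
    have aG: "a \<in> carrier G" using a assms by auto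
    have "c \<otimes> d \<otimes> a = c \<otimes> (a \<otimes> d)" using cG dG aG da by (simp add: m_assoc)
    also have "\<dots> = a \<otimes> c \<otimes> d" using cG dG aG ca by (simp add: m_assoc[symmetric])
    finally show "c \<otimes> d \<otimes> a = a \<otimes> (c \<otimes> d)" using cG dG aG by (simp add: m_assoc)
  qed
qed

lemma centralizerD:
  "c \<in> centralizer G A \<Longrightarrow> a \<in> A \<Longrightarrow> c \<otimes> a = a \<otimes> c"
  unfolding centralizer_def by auto

lemma prod_subgroup:
  assumes A: "subgroup A G" and B: "subgroup B G"
    and nor: "\<And>a b. a \<in> A \<Longrightarrow> b \<in> B \<Longrightarrow> a \<otimes> b \<otimes> inv a \<in> B"
  shows "subgroup (A <#> B) G"
proof (rule subgroupI)
  have AG: "A \<subseteq> carrier G" and BG: "B \<subseteq> carrier G" using A B subgroup.subset by auto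
  show "A <#> B \<subseteq> carrier G" using setmult_subset_G[OF AG BG] .
  show "A <#> B \<noteq> {}" using A B subgroup.one_closed unfolding set_mult_def by fastforce
next
  have AG: "A \<subseteq> carrier G" and BG: "B \<subseteq> carrier G" using A B subgroup.subset by auto
  fix x assume "x \<in> A <#> B"
  then obtain a b where a: "a \<in> A" and b: "b \<in> B" and x: "x = a \<otimes> b" unfolding set_mult_def by auto
  have aG: "a \<in> carrier G" and bG: "b \<in> carrier G" using a b AG BG by auto
  have "inv x = inv a \<otimes> (a \<otimes> inv b \<otimes> inv a)" using aG bG x by (simp add: inv_mult_group m_assoc[symmetric])
  moreover have "inv a \<in> A" by (rule subgroup.m_inv_closed[OF A a])
  moreover have "a \<otimes> inv b \<otimes> inv a \<in> B" using nor[OF a subgroup.m_inv_closed[OF B b]] .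
  ultimately show "inv x \<in> A <#> B" unfolding set_mult_def by auto
next
  have AG: "A \<subseteq> carrier G" and BG: "B \<subseteq> carrier G" using A B subgroup.subset by auto
  fix x y assume "x \<in> A <#> B" "y \<in> A <#> B"
  then obtain a b a' b' where a: "a \<in> A" and b: "b \<in> B" and x: "x = a \<otimes> b"
    and a': "a' \<in> A" and b': "b' \<in> B" and y: "y = a' \<otimes> b'" unfolding set_mult_def by auto
  have aG: "a \<in> carrier G" and bG: "b \<in> carrier G" and a'G: "a' \<in> carrier G" and b'G: "b' \<in> carrier G"
    using a b a' b' AG BG by auto
  have "x \<otimes> y = (a \<otimes> a') \<otimes> ((inv a' \<otimes> b \<otimes> inv (inv a')) \<otimes> b')"
    using aG bG a'G b'G x y by (simp add: m_assoc)
  moreover have "a \<otimes> a' \<in> A" by (rule subgroup.m_closed[OF A a a'])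
  moreover have "inv a' \<otimes> b \<otimes> inv (inv a') \<in> B" using nor[OF subgroup.m_inv_closed[OF A a'] b] .
  hence "(inv a' \<otimes> b \<otimes> inv (inv a')) \<otimes> b' \<in> B" by (rule subgroup.m_closed[OF B _ b'])
  ultimately show "x \<otimes> y \<in> A <#> B" unfolding set_mult_def by auto
qed

lemma rcos_eq_iff:
  assumes "subgroup S G" "a \<in> carrier G" "b \<in> carrier G"
  shows "S #> a = S #> b \<longleftrightarrow> a \<otimes> inv b \<in> S"
proof
  assume "S #> a = S #> b"
  hence "a \<in> S #> b" using rcos_self[OF assms(2,1)] by simp
  thus "a \<otimes> inv b \<in> S" using subgroup.rcos_module_imp[OF assms(1) is_group assms(3)] by simp
next
  assume "a \<otimes> inv b \<in> S"
  hence "a \<in> S #> b" using subgroup.rcos_module_rev[OF assms(1) is_group assms(3) assms(2)] by simp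
  thus "S #> a = S #> b" using repr_independence[OF _ assms(3) assms(1)] by simp
qed


lemma fixed_point_conj:
  assumes fin: "finite (carrier G)" and pr: "Factorial_Ring.prime (p::nat)"
    and M: "subgroup M G" and P: "subgroup P G" and PM: "P \<subseteq> M" and cardP: "card P = p ^ e"
    and ndvd: "\<not> p ^ Suc e dvd card M"
    and Z: "subgroup Z G" and ZM: "Z \<subseteq> M" and cardZ: "card Z = p ^ s"
  shows "\<exists>y\<in>M. \<forall>x\<in>Z. y \<otimes> x \<otimes> inv y \<in> P"
proof -
  define \<Omega> where "\<Omega> = rcosets\<^bsub>G\<lparr>carrier := M\<rparr>\<^esub> P"
  have \<Omega>_eq: "\<Omega> = (\<lambda>y. P #> y) ` M" unfolding \<Omega>_def RCOSETS_def by auto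
  have PG: "P \<subseteq> carrier G" using subgroup.subset[OF P] .
  have MG: "M \<subseteq> carrier G" using subgroup.subset[OF M] .
  have ZG: "Z \<subseteq> carrier G" using subgroup.subset[OF Z] .
  interpret Mg: group "G\<lparr>carrier := M\<rparr>" using subgroup_imp_group[OF M] .
  interpret Zg: group "G\<lparr>carrier := Z\<rparr>" using subgroup_imp_group[OF Z] .
  have PsubM: "subgroup P (G\<lparr>carrier := M\<rparr>)" using subgroup_incl[OF P M PM] .
  have lag: "card \<Omega> * card P = card M"
    using Mg.lagrange[OF PsubM] unfolding \<Omega>_def order_def by simp
  have finM: "finite M" using fin MG finite_subset by blast
  have finOmega: "finite \<Omega>" using \<Omega>_eq finM by simp
  have OmG: "S \<subseteq> carrier G" if SO: "S \<in> \<Omega>" for S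
  proof -
    obtain y where y: "y \<in> M" and S: "S = P #> y" using SO \<Omega>_eq by auto
    have yG: "y \<in> carrier G" using y MG by auto
    show ?thesis using r_coset_subset_G[OF PG yG] S by simp
  qed
  define \<phi> where "\<phi> = (\<lambda>x. \<lambda>S\<in>\<Omega>. S #> inv x)"
  have act_closed: "S #> inv x \<in> \<Omega>" if SO: "S \<in> \<Omega>" and "x \<in> Z" for S x
  proof -
    obtain y where y: "y \<in> M" and S: "S = P #> y" using SO \<Omega>_eq by auto
    have yG: "y \<in> carrier G" using y MG by auto
    have xG: "x \<in> carrier G" using that(2) ZG by auto
    have "S #> inv x = P #> (y \<otimes> inv x)"
      using S coset_mult_assoc[OF PG yG inv_closed[OF xG]] by simp
    moreover have "y \<otimes> inv x \<in> M"
      using subgroup.m_closed[OF M y] subgroup.m_inv_closed[OF M] that(2) ZM by auto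
    ultimately show ?thesis using \<Omega>_eq by auto
  qed
  have act_comp: "(S #> inv y) #> inv x = S #> inv (x \<otimes> y)" if "S \<in> \<Omega>" "x \<in> Z" "y \<in> Z" for S x y
  proof -
    have SG: "S \<subseteq> carrier G" using OmG[OF that(1)] .
    have xG: "x \<in> carrier G" and yG: "y \<in> carrier G" using that(2,3) ZG by auto
    show ?thesis using coset_mult_assoc[OF SG inv_closed[OF yG] inv_closed[OF xG]] xG yG
      by (simp add: inv_mult_group)
  qed
  have act_one: "S #> inv \<one> = S" if "S \<in> \<Omega>" for S
  proof -
    have SG: "S \<subseteq> carrier G" using OmG[OF that(1)] .
    show ?thesis using coset_mult_one[OF SG] by simp
  qed
  have bij: "\<phi> x \<in> Bij \<Omega>" if x: "x \<in> Z" for x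
  proof -
    have ix: "inv x \<in> Z" using subgroup.m_inv_closed[OF Z x] .
    have xG: "x \<in> carrier G" using x ZG by auto
    have "bij_betw (\<lambda>S. S #> inv x) \<Omega> \<Omega>"
    proof (rule bij_betw_byWitness[where f'="\<lambda>S. S #> inv (inv x)"])
      show "\<forall>a\<in>\<Omega>. a #> inv x #> inv (inv x) = a"
        using act_comp[OF _ ix x] act_one xG by simp
      show "\<forall>a\<in>\<Omega>. a #> inv (inv x) #> inv x = a"
        using act_comp[OF _ x ix] act_one xG by simp
      show "(\<lambda>S. S #> inv x) ` \<Omega> \<subseteq> \<Omega>" using act_closed x by auto
      show "(\<lambda>S. S #> inv (inv x)) ` \<Omega> \<subseteq> \<Omega>" using act_closed ix by auto
    qed
    hence "bij_betw (\<phi> x) \<Omega> \<Omega>" unfolding \<phi>_def by (rule bij_betw_cong[THEN iffD1, rotated]) auto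
    thus ?thesis unfolding Bij_def \<phi>_def by auto
  qed
  have hom: "\<phi> \<in> hom (G\<lparr>carrier := Z\<rparr>) (BijGroup \<Omega>)"
  proof (rule homI)
    fix x assume "x \<in> carrier (G\<lparr>carrier := Z\<rparr>)"
    thus "\<phi> x \<in> carrier (BijGroup \<Omega>)" using bij unfolding BijGroup_def by simp
  next
    fix x y assume x: "x \<in> carrier (G\<lparr>carrier := Z\<rparr>)" and y: "y \<in> carrier (G\<lparr>carrier := Z\<rparr>)"
    hence x': "x \<in> Z" and y': "y \<in> Z" by auto
    have "\<phi> (x \<otimes> y) = compose \<Omega> (\<phi> x) (\<phi> y)"
    proof (rule ext)
      fix S show "\<phi> (x \<otimes> y) S = compose \<Omega> (\<phi> x) (\<phi> y) S"
        using act_comp[OF _ x' y'] act_closed[OF _ y'] unfolding \<phi>_def compose_def by auto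
    qed
    thus "\<phi> (x \<otimes>\<^bsub>G\<lparr>carrier := Z\<rparr>\<^esub> y) = \<phi> x \<otimes>\<^bsub>BijGroup \<Omega>\<^esub> \<phi> y"
      using bij[OF x'] bij[OF y'] unfolding BijGroup_def by simp
  qed
  interpret A: group_action "G\<lparr>carrier := Z\<rparr>" \<Omega> \<phi>
    unfolding group_action_def group_hom_def group_hom_axioms_def
    using hom Zg.is_group group_BijGroup by auto
  show ?thesis
  proof (rule ccontr)
    assume nofix: "\<not> ?thesis"
    have orbdvd: "p dvd card Ob" if Ob: "Ob \<in> orbits (G\<lparr>carrier := Z\<rparr>) \<Omega> \<phi>" for Ob
    proof -
      obtain S where S: "S \<in> \<Omega>" and ObS: "Ob = orbit (G\<lparr>carrier := Z\<rparr>) \<phi> S"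
        using Ob unfolding orbits_def by auto
      have "card Ob * card (stabilizer (G\<lparr>carrier := Z\<rparr>) \<phi> S) = p ^ s"
        using A.orbit_stabilizer_theorem[OF S] ObS cardZ unfolding order_def by simp
      hence "card Ob dvd p ^ s" by (metis dvd_triv_left)
      then obtain i where i: "card Ob = p ^ i" using divides_primepow_nat[OF pr] by auto
      have "i \<noteq> 0"
      proof
        assume "i = 0"
        hence c1: "card Ob = 1" using i by simp
        have SO: "S \<in> Ob" unfolding ObS orbit_def
        proof -
          have "\<phi> \<one> S = S" using act_one[OF S] unfolding \<phi>_def using S by simp
          thus "S \<in> {\<phi> g S |g. g \<in> carrier (G\<lparr>carrier := Z\<rparr>)}"
            using subgroup.one_closed[OF Z] by force
        qed
        have fixS: "\<phi> x S = S" if x: "x \<in> Z" for x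
        proof -
          have "\<phi> x S \<in> Ob" unfolding ObS orbit_def using x by auto
          thus ?thesis using SO c1 by (metis card_1_singletonE singletonD)
        qed
        obtain y where y: "y \<in> M" and Sy: "S = P #> y" using S \<Omega>_eq by auto
        have yG: "y \<in> carrier G" using y MG by auto
        have "y \<otimes> x \<otimes> inv y \<in> P" if x: "x \<in> Z" for x
        proof -
          have ix: "inv x \<in> Z" using subgroup.m_inv_closed[OF Z x] .
          have xG: "x \<in> carrier G" using x ZG by auto
          have "S #> inv (inv x) = S" using fixS[OF ix] S unfolding \<phi>_def by simp
          hence "P #> (y \<otimes> x) = P #> y" using Sy coset_mult_assoc[OF PG yG xG] xG by simp
          hence "y \<otimes> x \<otimes> inv y \<in> P" using rcos_eq_iff[OF P _ yG] xG yG by simp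
          thus ?thesis .
        qed
        thus False using nofix y by auto
      qed
      thus ?thesis using i by (simp add: pr prime_dvd_power_iff)
    qed
    have "(\<Sum>Ob\<in>orbits (G\<lparr>carrier := Z\<rparr>) \<Omega> \<phi>. \<Sum>S\<in>Ob. (1::nat)) = (\<Sum>S\<in>\<Omega>. 1)"
      using A.disjoint_sum[OF finOmega] by blast
    hence "(\<Sum>Ob\<in>orbits (G\<lparr>carrier := Z\<rparr>) \<Omega> \<phi>. card Ob) = card \<Omega>" by simp
    hence "p dvd card \<Omega>" using orbdvd by (metis dvd_sum)
    hence "p * p ^ e dvd card \<Omega> * card P" using cardP by simp
    hence "p ^ Suc e dvd card M" using lag by simp
    thus False using ndvd by simp
  qed
qed


lemma exponent_pgroup:
  assumes fin: "finite (carrier G)" and pr: "Factorial_Ring.prime (p::nat)"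
    and ex: "\<And>y. y \<in> carrier G \<Longrightarrow> y [^] (p ^ e) = \<one>"
  shows "\<exists>k. card (carrier G) = p ^ k"
proof (rule ccontr)
  assume nk: "\<not> ?thesis"
  define n where "n = card (carrier G)"
  have n0: "n \<noteq> 0" unfolding n_def using fin by (simp add: carrier_not_empty)
  have pnu: "\<not> is_unit p" using pr by auto
  obtain r where r: "n = p ^ multiplicity p n * r" and pr_ndvd: "\<not> p dvd r"
    using multiplicity_decompose'[OF n0 pnu] by blast
  have "r \<noteq> 1" using r nk n_def by auto
  then obtain q where q: "Factorial_Ring.prime q" and qr: "q dvd r" using prime_factor_nat by blast
  have qp: "q \<noteq> p" using qr pr_ndvd by auto
  have qn: "q dvd n" using qr r by (metis dvd_mult)
  define a where "a = multiplicity q n"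
  have a1: "a \<ge> 1" unfolding a_def
    using prime_multiplicity_gt_zero_iff[of q n] qn n0 q by simp
  obtain m where m: "n = q ^ a * m" using multiplicity_dvd[of q n] unfolding a_def by (auto elim: dvdE)
  obtain S where S: "subgroup S G" and cS: "card S = q ^ a"
    using sylow_thm[of q G a m] q is_group m fin unfolding n_def order_def by auto
  have "card S \<ge> 2"
  proof -
    have "q \<ge> 2" using q prime_ge_2_nat by blast
    moreover have "q ^ 1 \<le> q ^ a" using a1 prime_gt_0_nat[OF q] by (intro power_increasing) auto
    ultimately show ?thesis using cS by simp
  qed
  have "\<exists>y \<in> S. y \<noteq> \<one>"
  proof (rule ccontr)
    assume "\<not> (\<exists>y \<in> S. y \<noteq> \<one>)"
    hence "S \<subseteq> {\<one>}" by auto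
    hence "card S \<le> card {\<one>}" by (intro card_mono) auto
    thus False using \<open>card S \<ge> 2\<close> by simp
  qed
  then obtain y where yS: "y \<in> S" and y1: "y \<noteq> \<one>" by blast
  have yG: "y \<in> carrier G" using subgroup.subset[OF S] yS by auto
  interpret Sg: group "G\<lparr>carrier := S\<rparr>" using subgroup_imp_group[OF S] .
  have "y [^]\<^bsub>G\<lparr>carrier := S\<rparr>\<^esub> order (G\<lparr>carrier := S\<rparr>) = \<one>\<^bsub>G\<lparr>carrier := S\<rparr>\<^esub>"
    using Sg.pow_order_eq_1 yS by simp
  hence yq: "y [^] (q ^ a) = \<one>" using cS nat_pow_consistent[of y "q ^ a" S] unfolding order_def by simp
  have "ord y dvd q ^ a" using pow_eq_id[OF yG] yq by simp
  moreover have "ord y dvd p ^ e" using pow_eq_id[OF yG] ex[OF yG] by simp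
  ultimately have d: "ord y dvd gcd (q ^ a) (p ^ e)" by simp
  have "coprime (q ^ a) (p ^ e)" using primes_coprime[OF q pr qp] by simp
  hence "gcd (q ^ a) (p ^ e) = 1" by simp
  hence "ord y = 1" using d by simp
  thus False using ord_eq_1[OF yG] y1 by simp
qed


lemma subgroup_pow_closed:
  assumes "subgroup S G" "x \<in> S"
  shows "x [^] (n::nat) \<in> S"
proof (induction n)
  case 0 show ?case using subgroup.one_closed[OF assms(1)] by simp
next
  case (Suc n)
  have "x [^] Suc n = x [^] n \<otimes> x" by simp
  thus ?case using subgroup.m_closed[OF assms(1) Suc assms(2)] by simp
qed

lemma conj_subgroup:
  assumes A: "subgroup A G" and g: "g \<in> carrier G"
  shows "subgroup ((\<lambda>a. g \<otimes> a \<otimes> inv g) ` A) G" "card ((\<lambda>a. g \<otimes> a \<otimes> inv g) ` A) = card A"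
proof -
  have AG: "A \<subseteq> carrier G" using subgroup.subset[OF A] .
  show "subgroup ((\<lambda>a. g \<otimes> a \<otimes> inv g) ` A) G"
  proof (rule subgroupI)
    show "(\<lambda>a. g \<otimes> a \<otimes> inv g) ` A \<subseteq> carrier G" using AG g by auto
    show "(\<lambda>a. g \<otimes> a \<otimes> inv g) ` A \<noteq> {}" using subgroup.one_closed[OF A] by auto
  next
    fix x assume "x \<in> (\<lambda>a. g \<otimes> a \<otimes> inv g) ` A"
    then obtain a where a: "a \<in> A" and x: "x = g \<otimes> a \<otimes> inv g" by auto
    have aG: "a \<in> carrier G" using a AG by auto
    have "inv x = g \<otimes> inv a \<otimes> inv g" using x aG g by (simp add: inv_mult_group m_assoc)
    thus "inv x \<in> (\<lambda>a. g \<otimes> a \<otimes> inv g) ` A" using subgroup.m_inv_closed[OF A a] by auto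
  next
    fix x y assume "x \<in> (\<lambda>a. g \<otimes> a \<otimes> inv g) ` A" "y \<in> (\<lambda>a. g \<otimes> a \<otimes> inv g) ` A"
    then obtain a b where a: "a \<in> A" and x: "x = g \<otimes> a \<otimes> inv g" and b: "b \<in> A" and y: "y = g \<otimes> b \<otimes> inv g" by auto
    have aG: "a \<in> carrier G" and bG: "b \<in> carrier G" using a b AG by auto
    have "x \<otimes> y = g \<otimes> (a \<otimes> b) \<otimes> inv g" using x y aG bG g by (simp add: m_assoc)
    thus "x \<otimes> y \<in> (\<lambda>a. g \<otimes> a \<otimes> inv g) ` A" using subgroup.m_closed[OF A a b] by auto
  qed
  have "inj_on (\<lambda>a. g \<otimes> a \<otimes> inv g) A"
    by (rule inj_onI) (use AG g conj_inj in blast)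
  thus "card ((\<lambda>a. g \<otimes> a \<otimes> inv g) ` A) = card A" by (rule card_image)
qed

lemma normal_in_sub:
  assumes K: "subgroup K G" and N: "subgroup N G" and KN: "K \<subseteq> N"
    and nor: "\<And>g k. g \<in> N \<Longrightarrow> k \<in> K \<Longrightarrow> g \<otimes> k \<otimes> inv g \<in> K"
  shows "K \<lhd> G\<lparr>carrier := N\<rparr>"
proof -
  interpret Ng: group "G\<lparr>carrier := N\<rparr>" using subgroup_imp_group[OF N] .
  show ?thesis
  proof (subst Ng.normal_inv_iff, intro conjI ballI)
    show "subgroup K (G\<lparr>carrier := N\<rparr>)" using subgroup_incl[OF K N KN] .
    fix x h assume x: "x \<in> carrier (G\<lparr>carrier := N\<rparr>)" and h: "h \<in> K"
    have "x \<in> N" using x by simp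
    thus "x \<otimes>\<^bsub>G\<lparr>carrier := N\<rparr>\<^esub> h \<otimes>\<^bsub>G\<lparr>carrier := N\<rparr>\<^esub> inv\<^bsub>G\<lparr>carrier := N\<rparr>\<^esub> x \<in> K"
      using nor[OF _ h] m_inv_consistent[OF N] by simp
  qed
qed

lemma quot_carrier:
  "carrier (G\<lparr>carrier := N\<rparr> Mod K) = (\<lambda>n. K #> n) ` N"
  unfolding carrier_FactGroup by simp

lemma quot_mult:
  assumes nK: "K \<lhd> G\<lparr>carrier := N\<rparr>" and a: "a \<in> N" and b: "b \<in> N"
  shows "(K #> a) <#> (K #> b) = K #> (a \<otimes> b)"
  using normal.rcos_sum[OF nK, of a b] a b by simp

lemma conj_coset:
  assumes S: "S \<subseteq> carrier G" and g: "g \<in> carrier G" and n: "n \<in> carrier G"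
    and inv: "(\<lambda>a. g \<otimes> a \<otimes> inv g) ` S = S"
  shows "g <# (S #> n) #> inv g = S #> (g \<otimes> n \<otimes> inv g)"
proof -
  have "g <# (S #> n) #> inv g = (\<lambda>s. g \<otimes> (s \<otimes> n) \<otimes> inv g) ` S"
    unfolding l_coset_def r_coset_def by auto
  also have "\<dots> = (\<lambda>t. t \<otimes> (g \<otimes> n \<otimes> inv g)) ` ((\<lambda>a. g \<otimes> a \<otimes> inv g) ` S)"
    unfolding image_image
  proof (rule image_cong[OF refl])
    fix s assume "s \<in> S"
    hence sG: "s \<in> carrier G" using S by auto
    show "g \<otimes> (s \<otimes> n) \<otimes> inv g = g \<otimes> s \<otimes> inv g \<otimes> (g \<otimes> n \<otimes> inv g)"
      using sG g n by (simp add: m_assoc)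
  qed
  also have "\<dots> = S #> (g \<otimes> n \<otimes> inv g)" unfolding inv r_coset_def by auto
  finally show ?thesis .
qed

lemma centralizer_conj:
  assumes A: "A \<subseteq> carrier G" and g: "g \<in> normalizer G A" and c: "c \<in> centralizer G A"
  shows "g \<otimes> c \<otimes> inv g \<in> centralizer G A"
proof -
  have gG: "g \<in> carrier G" using normalizer_carrier[OF A g] .
  have cG: "c \<in> carrier G" using c unfolding centralizer_def by auto
  show ?thesis unfolding centralizer_def
  proof (intro CollectI conjI ballI)
    show "g \<otimes> c \<otimes> inv g \<in> carrier G" using gG cG by simp
    fix a assume a: "a \<in> A"
    have aG: "a \<in> carrier G" using a A by auto
    define a' where "a' = inv g \<otimes> a \<otimes> g"
    have a': "a' \<in> A" unfolding a'_def using normalizerD'[OF A g a] .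
    have a'G: "a' \<in> carrier G" using a' A by auto
    have aa: "a = g \<otimes> a' \<otimes> inv g" unfolding a'_def using aG gG by (simp add: m_assoc)
    have ca: "c \<otimes> a' = a' \<otimes> c" using centralizerD[OF c a'] .
    have "g \<otimes> c \<otimes> inv g \<otimes> a = g \<otimes> (c \<otimes> a') \<otimes> inv g" using aa gG cG a'G by (simp add: m_assoc)
    also have "\<dots> = g \<otimes> (a' \<otimes> c) \<otimes> inv g" using ca by simp
    also have "\<dots> = a \<otimes> (g \<otimes> c \<otimes> inv g)" using aa gG cG a'G by (simp add: m_assoc)
    finally show "g \<otimes> c \<otimes> inv g \<otimes> a = a \<otimes> (g \<otimes> c \<otimes> inv g)" .
  qed
qed

end



locale L21 = group G for G (structure) +
  fixes p :: nat and e :: nat and P H Q NHQ CHQ NHP CGP K L :: "'a set"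
  assumes fin: "finite (carrier G)" and pr: "Factorial_Ring.prime p"
    and P: "subgroup P G" and cardP: "card P = p ^ e"
    and e_def: "e = multiplicity p (card (carrier G))"
    and Hn: "H \<lhd> G" and GPH: "carrier G = P <#> H"
    and Q_def: "Q = P \<inter> H"
    and NHQ_def: "NHQ = normalizer G Q \<inter> H"
    and CHQ_def: "CHQ = centralizer G Q \<inter> H"
    and NHP_def: "NHP = normalizer G P \<inter> H"
    and CGP_def: "CGP = centralizer G P"
    and K_def: "K = Q <#> CHQ"
    and L_def: "L = P <#> CGP"
begin

lemma H: "subgroup H G" using normal_imp_subgroup[OF Hn] .
lemma PG: "P \<subseteq> carrier G" using subgroup.subset[OF P] .
lemma HG: "H \<subseteq> carrier G" using subgroup.subset[OF H] .
lemma Hconj: "g \<in> carrier G \<Longrightarrow> h \<in> H \<Longrightarrow> g \<otimes> h \<otimes> inv g \<in> H"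
  using normal.inv_op_closed2[OF Hn] by simp
lemma Q: "subgroup Q G" unfolding Q_def using subgroups_Inter_pair[OF P H] .
lemma QP: "Q \<subseteq> P" unfolding Q_def by auto
lemma QH: "Q \<subseteq> H" unfolding Q_def by auto
lemma QG: "Q \<subseteq> carrier G" using QP PG by auto
lemma finite_sub: "A \<subseteq> carrier G \<Longrightarrow> finite A" using fin finite_subset by blast
lemma finP: "finite P" using finite_sub[OF PG] .
lemma finQ: "finite Q" using finite_sub[OF QG] .

lemma ndvd: assumes M: "subgroup M G" shows "\<not> p ^ Suc e dvd card M"
proof
  assume d: "p ^ Suc e dvd card M"
  have "card (rcosets M) * card M = order G" using lagrange[OF M] .
  hence "card M dvd card (carrier G)" unfolding order_def by (metis dvd_triv_right)
  hence "p ^ Suc e dvd card (carrier G)" using d dvd_trans by blast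
  moreover have "card (carrier G) \<noteq> 0" using fin by (simp add: carrier_not_empty)
  moreover have "\<not> is_unit p" using pr by auto
  ultimately have "Suc e \<le> e" unfolding e_def using power_dvd_iff_le_multiplicity by blast
  thus False by simp
qed

lemma P_norm_P: "x \<in> P \<Longrightarrow> x \<in> normalizer G P"
proof (rule normalizerI_fin[OF finP PG])
  assume x: "x \<in> P"
  show "x \<in> carrier G" using x PG by auto
  fix a assume a: "a \<in> P"
  show "x \<otimes> a \<otimes> inv x \<in> P"
    using subgroup.m_closed[OF P subgroup.m_closed[OF P x a] subgroup.m_inv_closed[OF P x]] .
qed

lemma NQ: "subgroup (normalizer G Q) G" using normalizer_imp_subgroup[OF QG] .
lemma NP: "subgroup (normalizer G P) G" using normalizer_imp_subgroup[OF PG] .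

lemma P_norm_Q: assumes x: "x \<in> P" shows "x \<in> normalizer G Q"
proof (rule normalizerI_fin[OF finQ QG])
  show xG: "x \<in> carrier G" using x PG by auto
  fix a assume a: "a \<in> Q"
  have "x \<otimes> a \<otimes> inv x \<in> P"
    using subgroup.m_closed[OF P subgroup.m_closed[OF P x] subgroup.m_inv_closed[OF P x]] a QP by auto
  moreover have "x \<otimes> a \<otimes> inv x \<in> H" using Hconj[OF xG] a QH by auto
  ultimately show "x \<otimes> a \<otimes> inv x \<in> Q" unfolding Q_def by auto
qed

lemma NHP_norm_Q: assumes n: "n \<in> NHP" shows "n \<in> normalizer G Q"
proof (rule normalizerI_fin[OF finQ QG])
  have nP: "n \<in> normalizer G P" and nH: "n \<in> H" using n unfolding NHP_def by auto
  show nG: "n \<in> carrier G" using normalizer_carrier[OF PG nP] .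
  fix a assume a: "a \<in> Q"
  have "n \<otimes> a \<otimes> inv n \<in> P" using normalizerD[OF PG nP] a QP by auto
  moreover have "n \<otimes> a \<otimes> inv n \<in> H" using Hconj[OF nG] a QH by auto
  ultimately show "n \<otimes> a \<otimes> inv n \<in> Q" unfolding Q_def by auto
qed

lemma NHQ: "subgroup NHQ G" unfolding NHQ_def using subgroups_Inter_pair[OF NQ H] .
lemma NHQG: "NHQ \<subseteq> carrier G" using subgroup.subset[OF NHQ] .
lemma NHP: "subgroup NHP G" unfolding NHP_def using subgroups_Inter_pair[OF NP H] .
lemma NHPG: "NHP \<subseteq> carrier G" using subgroup.subset[OF NHP] .
lemma NHP_NHQ: "NHP \<subseteq> NHQ" using NHP_norm_Q unfolding NHQ_def NHP_def by auto

lemma CQ: "subgroup (centralizer G Q) G" using centralizer_subgroup[OF QG] .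
lemma CHQ: "subgroup CHQ G" unfolding CHQ_def using subgroups_Inter_pair[OF CQ H] .
lemma CHQG: "CHQ \<subseteq> carrier G" using subgroup.subset[OF CHQ] .
lemma CGP: "subgroup CGP G" unfolding CGP_def using centralizer_subgroup[OF PG] .
lemma CGPG: "CGP \<subseteq> carrier G" using subgroup.subset[OF CGP] .

lemma centr_norm: assumes A: "A \<subseteq> carrier G" "finite A" and c: "c \<in> centralizer G A"
  shows "c \<in> normalizer G A"
proof (rule normalizerI_fin[OF A(2) A(1)])
  show cG: "c \<in> carrier G" using c unfolding centralizer_def by auto
  fix a assume a: "a \<in> A"
  have aG: "a \<in> carrier G" using a A by auto
  have "c \<otimes> a \<otimes> inv c = a \<otimes> c \<otimes> inv c" using centralizerD[OF c a] by simp
  also have "\<dots> = a" using aG cG by (simp add: m_assoc)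
  finally show "c \<otimes> a \<otimes> inv c \<in> A" using a by simp
qed

lemma CHQ_NHQ: "CHQ \<subseteq> NHQ" unfolding CHQ_def NHQ_def using centr_norm[OF QG finQ] by auto
lemma Q_NHQ: "Q \<subseteq> NHQ" unfolding NHQ_def using P_norm_Q QP QH by auto

lemma normQ_CHQ: assumes g: "g \<in> normalizer G Q" and c: "c \<in> CHQ"
  shows "g \<otimes> c \<otimes> inv g \<in> CHQ"
proof -
  have gG: "g \<in> carrier G" using normalizer_carrier[OF QG g] .
  have "g \<otimes> c \<otimes> inv g \<in> centralizer G Q" using centralizer_conj[OF QG g] c unfolding CHQ_def by auto
  moreover have "g \<otimes> c \<otimes> inv g \<in> H" using Hconj[OF gG] c unfolding CHQ_def by auto
  ultimately show ?thesis unfolding CHQ_def by auto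
qed

lemma K: "subgroup K G" unfolding K_def
proof (rule prod_subgroup[OF Q CHQ])
  fix a b assume "a \<in> Q" "b \<in> CHQ"
  thus "a \<otimes> b \<otimes> inv a \<in> CHQ" using normQ_CHQ P_norm_Q QP by auto
qed
lemma KG: "K \<subseteq> carrier G" using subgroup.subset[OF K] .
lemma finK: "finite K" using finite_sub[OF KG] .

lemma K_NHQ: "K \<subseteq> NHQ"
proof
  fix k assume "k \<in> K"
  then obtain q c where q: "q \<in> Q" and c: "c \<in> CHQ" and k: "k = q \<otimes> c" unfolding K_def set_mult_def by auto
  show "k \<in> NHQ" using subgroup.m_closed[OF NHQ] q c Q_NHQ CHQ_NHQ k by auto
qed
lemma KH: "K \<subseteq> H" using K_NHQ unfolding NHQ_def by auto
lemma Q_K: "Q \<subseteq> K" unfolding K_def set_mult_def using subgroup.one_closed[OF CHQ] QG by force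
lemma CHQ_K: "CHQ \<subseteq> K" unfolding K_def set_mult_def using subgroup.one_closed[OF Q] CHQG by force

lemma normQ_K: assumes g: "g \<in> normalizer G Q" and k: "k \<in> K"
  shows "g \<otimes> k \<otimes> inv g \<in> K"
proof -
  have gG: "g \<in> carrier G" using normalizer_carrier[OF QG g] .
  obtain q c where q: "q \<in> Q" and c: "c \<in> CHQ" and kk: "k = q \<otimes> c" using k unfolding K_def set_mult_def by auto
  have qG: "q \<in> carrier G" and cG: "c \<in> carrier G" using q c QG CHQG by auto
  have "g \<otimes> k \<otimes> inv g = (g \<otimes> q \<otimes> inv g) \<otimes> (g \<otimes> c \<otimes> inv g)"
    using kk gG qG cG by (simp add: m_assoc)
  moreover have "g \<otimes> q \<otimes> inv g \<in> Q" using normalizerD[OF QG g q] .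
  moreover have "g \<otimes> c \<otimes> inv g \<in> CHQ" using normQ_CHQ[OF g c] .
  ultimately show ?thesis unfolding K_def set_mult_def by auto
qed

lemma NHQ_norm_Q: "n \<in> NHQ \<Longrightarrow> n \<in> normalizer G Q" unfolding NHQ_def by auto

lemma K_normal: "K \<lhd> G\<lparr>carrier := NHQ\<rparr>"
  by (rule normal_in_sub[OF K NHQ K_NHQ]) (use normQ_K NHQ_norm_Q in auto)

lemma P_normalizes_CGP: assumes g: "g \<in> normalizer G P" and c: "c \<in> CGP"
  shows "g \<otimes> c \<otimes> inv g \<in> CGP"
  using centralizer_conj[OF PG g] c unfolding CGP_def by auto

lemma L: "subgroup L G" unfolding L_def
proof (rule prod_subgroup[OF P CGP])
  fix a b assume "a \<in> P" "b \<in> CGP"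
  thus "a \<otimes> b \<otimes> inv a \<in> CGP" using P_normalizes_CGP P_norm_P by auto
qed
lemma LG: "L \<subseteq> carrier G" using subgroup.subset[OF L] .

lemma CGP_NP: "CGP \<subseteq> normalizer G P" unfolding CGP_def using centr_norm[OF PG finP] by auto

lemma L_NP: "L \<subseteq> normalizer G P"
proof
  fix k assume "k \<in> L"
  then obtain q c where q: "q \<in> P" and c: "c \<in> CGP" and k: "k = q \<otimes> c" unfolding L_def set_mult_def by auto
  show "k \<in> normalizer G P" using subgroup.m_closed[OF NP] P_norm_P[OF q] c CGP_NP k by auto
qed
lemma P_L: "P \<subseteq> L" unfolding L_def set_mult_def using subgroup.one_closed[OF CGP] PG by force

lemma L_normal: "L \<lhd> G\<lparr>carrier := normalizer G P\<rparr>"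
proof (rule normal_in_sub[OF L NP L_NP])
  fix g k assume g: "g \<in> normalizer G P" and k: "k \<in> L"
  have gG: "g \<in> carrier G" using normalizer_carrier[OF PG g] .
  obtain q c where q: "q \<in> P" and c: "c \<in> CGP" and kk: "k = q \<otimes> c" using k unfolding L_def set_mult_def by auto
  have qG: "q \<in> carrier G" and cG: "c \<in> carrier G" using q c PG CGPG by auto
  have "g \<otimes> k \<otimes> inv g = (g \<otimes> q \<otimes> inv g) \<otimes> (g \<otimes> c \<otimes> inv g)"
    using kk gG qG cG by (simp add: m_assoc)
  moreover have "g \<otimes> q \<otimes> inv g \<in> P" using normalizerD[OF PG g q] .
  moreover have "g \<otimes> c \<otimes> inv g \<in> CGP" using P_normalizes_CGP[OF g c] .
  ultimately show "g \<otimes> k \<otimes> inv g \<in> L" unfolding L_def set_mult_def by auto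
qed


lemma normQ_normK: assumes g: "g \<in> normalizer G Q"
  shows "(\<lambda>a. g \<otimes> a \<otimes> inv g) ` K = K"
proof -
  have gG: "g \<in> carrier G" using normalizer_carrier[OF QG g] .
  have "g \<in> normalizer G K" by (rule normalizerI_fin[OF finK KG gG]) (rule normQ_K[OF g])
  thus ?thesis using normalizer_iff[OF KG] by simp
qed

lemma conj_Kcoset: assumes x: "x \<in> normalizer G Q" and n: "n \<in> carrier G"
  shows "x <# (K #> n) #> inv x = K #> (x \<otimes> n \<otimes> inv x)"
  using conj_coset[OF KG normalizer_carrier[OF QG x] n normQ_normK[OF x]] .

lemma Fix_eq: "conj_fixed G P (carrier (G\<lparr>carrier := NHQ\<rparr> Mod K)) = (\<lambda>n. K #> n) ` NHP"
proof
  show "(\<lambda>n. K #> n) ` NHP \<subseteq> conj_fixed G P (carrier (G\<lparr>carrier := NHQ\<rparr> Mod K))"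
  proof
    fix Y assume "Y \<in> (\<lambda>n. K #> n) ` NHP"
    then obtain n where n: "n \<in> NHP" and Y: "Y = K #> n" by auto
    have nG: "n \<in> carrier G" using n NHPG by auto
    have nP: "n \<in> normalizer G P" and nH: "n \<in> H" using n unfolding NHP_def by auto
    show "Y \<in> conj_fixed G P (carrier (G\<lparr>carrier := NHQ\<rparr> Mod K))"
      unfolding conj_fixed_def quot_carrier
    proof (intro CollectI conjI ballI)
      show "Y \<in> (\<lambda>n. K #> n) ` NHQ" using Y n NHP_NHQ by auto
      fix x assume x: "x \<in> P"
      have xG: "x \<in> carrier G" using x PG by auto
      have ix: "inv x \<in> P" using subgroup.m_inv_closed[OF P x] .
      have "x \<otimes> n \<otimes> inv x \<otimes> inv n = x \<otimes> (n \<otimes> inv x \<otimes> inv n)" using xG nG by (simp add: m_assoc)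
      moreover have "n \<otimes> inv x \<otimes> inv n \<in> P" using normalizerD[OF PG nP ix] .
      ultimately have inP: "x \<otimes> n \<otimes> inv x \<otimes> inv n \<in> P" using subgroup.m_closed[OF P x] by simp
      have "x \<otimes> n \<otimes> inv x \<otimes> inv n \<in> H"
        using subgroup.m_closed[OF H Hconj[OF xG nH] subgroup.m_inv_closed[OF H nH]] .
      hence "x \<otimes> n \<otimes> inv x \<otimes> inv n \<in> K" using inP Q_K unfolding Q_def by auto
      hence "K #> (x \<otimes> n \<otimes> inv x) = K #> n" using rcos_eq_iff[OF K _ nG] xG nG by simp
      thus "x <# Y #> inv x = Y" using conj_Kcoset[OF P_norm_Q[OF x] nG] Y by simp
    qed
  qed
next
  show "conj_fixed G P (carrier (G\<lparr>carrier := NHQ\<rparr> Mod K)) \<subseteq> (\<lambda>n. K #> n) ` NHP"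
  proof
    fix Y assume Yf: "Y \<in> conj_fixed G P (carrier (G\<lparr>carrier := NHQ\<rparr> Mod K))"
    then obtain n where n: "n \<in> NHQ" and Y: "Y = K #> n" unfolding conj_fixed_def quot_carrier by auto
    have nG: "n \<in> carrier G" using n NHQG by auto
    have nQ: "n \<in> normalizer G Q" and nH: "n \<in> H" using n unfolding NHQ_def by auto
    have kx: "x \<otimes> n \<otimes> inv x \<otimes> inv n \<in> K" if x: "x \<in> P" for x
    proof -
      have xG: "x \<in> carrier G" using x PG by auto
      have "x <# Y #> inv x = Y" using Yf x unfolding conj_fixed_def by auto
      hence "K #> (x \<otimes> n \<otimes> inv x) = K #> n" using conj_Kcoset[OF P_norm_Q[OF x] nG] Y by simp
      thus ?thesis using rcos_eq_iff[OF K _ nG] xG nG by simp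
    qed
    have inG: "inv n \<in> carrier G" using nG by simp
    define Z where "Z = (\<lambda>a. inv n \<otimes> a \<otimes> inv (inv n)) ` P"
    have Z: "subgroup Z G" and cardZ: "card Z = p ^ e"
      using conj_subgroup[OF P inG] cardP unfolding Z_def by auto
    define M where "M = P <#> K"
    have M: "subgroup M G" unfolding M_def
      by (rule prod_subgroup[OF P K]) (rule normQ_K[OF P_norm_Q])
    have PM: "P \<subseteq> M" unfolding M_def set_mult_def using subgroup.one_closed[OF K] PG by force
    have ZM: "Z \<subseteq> M"
    proof
      fix z assume "z \<in> Z"
      then obtain x where x: "x \<in> P" and z: "z = inv n \<otimes> x \<otimes> inv (inv n)" unfolding Z_def by auto
      have xG: "x \<in> carrier G" using x PG by auto
      define k where "k = x \<otimes> n \<otimes> inv x \<otimes> inv n"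
      have k: "k \<in> K" unfolding k_def using kx[OF x] .
      have kG: "k \<in> carrier G" using k KG by auto
      have inQ: "inv n \<in> normalizer G Q" using subgroup.m_inv_closed[OF NQ nQ] .
      define k' where "k' = inv n \<otimes> k \<otimes> inv (inv n)"
      have k': "k' \<in> K" unfolding k'_def using normQ_K[OF inQ k] .
      have k'G: "k' \<in> carrier G" using k' KG by auto
      have ix: "inv x \<in> P" using subgroup.m_inv_closed[OF P x] .
      define k'' where "k'' = inv x \<otimes> k' \<otimes> inv (inv x)"
      have k'': "k'' \<in> K" unfolding k''_def using normQ_K[OF P_norm_Q[OF ix] k'] .
      have "z = x \<otimes> k''" unfolding z k''_def k'_def k_def using xG nG by (simp add: m_assoc)
      thus "z \<in> M" unfolding M_def set_mult_def using x k'' by auto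
    qed
    obtain y where yM: "y \<in> M" and yfix: "\<forall>z\<in>Z. y \<otimes> z \<otimes> inv y \<in> P"
      using fixed_point_conj[OF fin pr M P PM cardP ndvd[OF M] Z ZM cardZ] by blast
    obtain x0 k0 where x0: "x0 \<in> P" and k0: "k0 \<in> K" and y: "y = x0 \<otimes> k0"
      using yM unfolding M_def set_mult_def by auto
    have x0G: "x0 \<in> carrier G" and k0G: "k0 \<in> carrier G" using x0 k0 PG KG by auto
    define g where "g = k0 \<otimes> inv n"
    have gG: "g \<in> carrier G" unfolding g_def using k0G nG by simp
    have gN: "g \<in> normalizer G P"
    proof (rule normalizerI_fin[OF finP PG gG])
      fix a assume a: "a \<in> P"
      have aG: "a \<in> carrier G" using a PG by auto
      have za: "inv n \<otimes> a \<otimes> inv (inv n) \<in> Z" unfolding Z_def using a by auto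
      have w: "y \<otimes> (inv n \<otimes> a \<otimes> inv (inv n)) \<otimes> inv y \<in> P" using yfix za by blast
      have "inv x0 \<otimes> (y \<otimes> (inv n \<otimes> a \<otimes> inv (inv n)) \<otimes> inv y) \<otimes> x0 \<in> P"
        using normalizerD'[OF PG P_norm_P[OF x0] w] .
      moreover have "inv x0 \<otimes> (y \<otimes> (inv n \<otimes> a \<otimes> inv (inv n)) \<otimes> inv y) \<otimes> x0 = g \<otimes> a \<otimes> inv g"
        unfolding y g_def using x0G k0G nG aG by (simp add: m_assoc inv_mult_group)
      ultimately show "g \<otimes> a \<otimes> inv g \<in> P" by simp
    qed
    define m where "m = inv g"
    have mN: "m \<in> normalizer G P" unfolding m_def using subgroup.m_inv_closed[OF NP gN] .
    have mm: "m = n \<otimes> inv k0" unfolding m_def g_def using k0G nG by (simp add: inv_mult_group)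
    have mH: "m \<in> H" unfolding mm
      using subgroup.m_closed[OF H nH subgroup.m_inv_closed[OF H]] k0 KH by auto
    have mNHP: "m \<in> NHP" unfolding NHP_def using mN mH by auto
    have mG: "m \<in> carrier G" using mNHP NHPG by auto
    have "n \<otimes> inv m = n \<otimes> k0 \<otimes> inv n" unfolding m_def g_def using k0G nG by (simp add: m_assoc)
    hence "n \<otimes> inv m \<in> K" using normQ_K[OF nQ k0] by simp
    hence "K #> n = K #> m" using rcos_eq_iff[OF K nG mG] by simp
    thus "Y \<in> (\<lambda>n. K #> n) ` NHP" using Y mNHP by auto
  qed
qed


lemma image_NHP_CHQ: "(\<lambda>n. K #> n) ` (NHP <#> CHQ) = (\<lambda>n. K #> n) ` NHP"
proof
  show "(\<lambda>n. K #> n) ` NHP \<subseteq> (\<lambda>n. K #> n) ` (NHP <#> CHQ)"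
  proof
    fix Y assume "Y \<in> (\<lambda>n. K #> n) ` NHP"
    then obtain n where n: "n \<in> NHP" and Y: "Y = K #> n" by auto
    have "n = n \<otimes> \<one>" using n NHPG by auto
    hence "n \<in> NHP <#> CHQ" unfolding set_mult_def using n subgroup.one_closed[OF CHQ] by blast
    thus "Y \<in> (\<lambda>n. K #> n) ` (NHP <#> CHQ)" using Y by auto
  qed
next
  show "(\<lambda>n. K #> n) ` (NHP <#> CHQ) \<subseteq> (\<lambda>n. K #> n) ` NHP"
  proof
    fix Y assume "Y \<in> (\<lambda>n. K #> n) ` (NHP <#> CHQ)"
    then obtain n c where n: "n \<in> NHP" and c: "c \<in> CHQ" and Y: "Y = K #> (n \<otimes> c)"
      unfolding set_mult_def by auto
    have nG: "n \<in> carrier G" and cG: "c \<in> carrier G" using n c NHPG CHQG by auto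
    have "n \<otimes> c \<otimes> inv n \<in> K" using normQ_CHQ[OF NHP_norm_Q[OF n] c] CHQ_K by auto
    hence "K #> (n \<otimes> c) = K #> n" using rcos_eq_iff[OF K _ nG] nG cG by simp
    thus "Y \<in> (\<lambda>n. K #> n) ` NHP" using Y n by auto
  qed
qed

lemma Mq_group: "group (G\<lparr>carrier := NHQ\<rparr> Mod K)"
  using normal.factorgroup_is_group[OF K_normal] .

lemma Mt_group: "group (G\<lparr>carrier := normalizer G P\<rparr> Mod L)"
  using normal.factorgroup_is_group[OF L_normal] .

lemma Mq_inv: assumes n: "n \<in> NHQ"
  shows "inv\<^bsub>G\<lparr>carrier := NHQ\<rparr> Mod K\<^esub> (K #> n) = K #> inv n"
proof -
  interpret Mq: group "G\<lparr>carrier := NHQ\<rparr> Mod K" using Mq_group .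
  have nG: "n \<in> carrier G" using n NHQG by auto
  have inQ: "inv n \<in> NHQ" using subgroup.m_inv_closed[OF NHQ n] .
  show ?thesis
  proof (rule Mq.inv_equality)
    show "(K #> inv n) \<otimes>\<^bsub>G\<lparr>carrier := NHQ\<rparr> Mod K\<^esub> (K #> n) = \<one>\<^bsub>G\<lparr>carrier := NHQ\<rparr> Mod K\<^esub>"
      using quot_mult[OF K_normal inQ n] nG coset_mult_one[OF KG] by simp
    show "K #> n \<in> carrier (G\<lparr>carrier := NHQ\<rparr> Mod K)" using n quot_carrier by auto
    show "K #> inv n \<in> carrier (G\<lparr>carrier := NHQ\<rparr> Mod K)" using inQ quot_carrier by auto
  qed
qed

lemma Fix_subgroup: "subgroup ((\<lambda>n. K #> n) ` NHP) (G\<lparr>carrier := NHQ\<rparr> Mod K)"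
proof -
  interpret Mq: group "G\<lparr>carrier := NHQ\<rparr> Mod K" using Mq_group .
  show ?thesis
  proof (rule Mq.subgroupI)
    show "(\<lambda>n. K #> n) ` NHP \<subseteq> carrier (G\<lparr>carrier := NHQ\<rparr> Mod K)"
      unfolding quot_carrier using NHP_NHQ by auto
    show "(\<lambda>n. K #> n) ` NHP \<noteq> {}" using subgroup.one_closed[OF NHP] by auto
  next
    fix Y assume "Y \<in> (\<lambda>n. K #> n) ` NHP"
    then obtain n where n: "n \<in> NHP" and Y: "Y = K #> n" by auto
    show "inv\<^bsub>G\<lparr>carrier := NHQ\<rparr> Mod K\<^esub> Y \<in> (\<lambda>n. K #> n) ` NHP"
      using Mq_inv[of n] n NHP_NHQ Y subgroup.m_inv_closed[OF NHP n] by auto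
  next
    fix Y1 Y2 assume "Y1 \<in> (\<lambda>n. K #> n) ` NHP" "Y2 \<in> (\<lambda>n. K #> n) ` NHP"
    then obtain n1 n2 where n1: "n1 \<in> NHP" and Y1: "Y1 = K #> n1" and n2: "n2 \<in> NHP" and Y2: "Y2 = K #> n2" by auto
    have "Y1 \<otimes>\<^bsub>G\<lparr>carrier := NHQ\<rparr> Mod K\<^esub> Y2 = K #> (n1 \<otimes> n2)"
      using quot_mult[OF K_normal, of n1 n2] n1 n2 NHP_NHQ Y1 Y2 by auto
    thus "Y1 \<otimes>\<^bsub>G\<lparr>carrier := NHQ\<rparr> Mod K\<^esub> Y2 \<in> (\<lambda>n. K #> n) ` NHP"
      using subgroup.m_closed[OF NHP n1 n2] by auto
  qed
qed

lemma KEY: assumes c: "c \<in> CHQ" and cN: "c \<in> normalizer G P" shows "c \<in> L"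
proof -
  have cG: "c \<in> carrier G" using c CHQG by auto
  have cH: "c \<in> H" and cC: "c \<in> centralizer G Q" using c unfolding CHQ_def by auto
  have icN: "inv c \<in> normalizer G P" using subgroup.m_inv_closed[OF NP cN] .
  define N where "N = p ^ e"
  have zQ: "inv x \<otimes> (inv c \<otimes> x \<otimes> c) \<in> Q" if x: "x \<in> P" for x
  proof -
    have xG: "x \<in> carrier G" using x PG by auto
    have "inv c \<otimes> x \<otimes> inv (inv c) \<in> P" using normalizerD[OF PG icN x] .
    hence "inv c \<otimes> x \<otimes> c \<in> P" using cG by simp
    hence inP: "inv x \<otimes> (inv c \<otimes> x \<otimes> c) \<in> P" using subgroup.m_closed[OF P subgroup.m_inv_closed[OF P x]] by simp
    have "inv x \<otimes> inv c \<otimes> inv (inv x) \<in> H" using Hconj[of "inv x" "inv c"] xG subgroup.m_inv_closed[OF H cH] by simp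
    hence "(inv x \<otimes> inv c \<otimes> inv (inv x)) \<otimes> c \<in> H" using subgroup.m_closed[OF H _ cH] by simp
    moreover have "(inv x \<otimes> inv c \<otimes> inv (inv x)) \<otimes> c = inv x \<otimes> (inv c \<otimes> x \<otimes> c)"
      using xG cG by (simp add: m_assoc)
    ultimately show ?thesis using inP unfolding Q_def by auto
  qed
  have conjpow: "inv (c [^] i) \<otimes> x \<otimes> c [^] i = x \<otimes> (inv x \<otimes> (inv c \<otimes> x \<otimes> c)) [^] i"
    if x: "x \<in> P" for x and i :: nat
  proof (induction i)
    case 0 show ?case using x PG by auto
  next
    case (Suc i)
    have xG: "x \<in> carrier G" using x PG by auto
    define z where "z = inv x \<otimes> (inv c \<otimes> x \<otimes> c)"
    have z: "z \<in> Q" unfolding z_def using zQ[OF x] .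
    have zG: "z \<in> carrier G" using z QG by auto
    have ziQ: "z [^] i \<in> Q" using subgroup_pow_closed[OF Q z] .
    have ziG: "z [^] i \<in> carrier G" using zG by simp
    have comm: "c \<otimes> z [^] i = z [^] i \<otimes> c" using centralizerD[OF cC ziQ] .
    have cxc: "inv c \<otimes> x \<otimes> c = x \<otimes> z" unfolding z_def using xG cG by (simp add: m_assoc)
    have "inv (c [^] Suc i) \<otimes> x \<otimes> c [^] Suc i = inv c \<otimes> (inv (c [^] i) \<otimes> x \<otimes> c [^] i) \<otimes> c"
      using cG xG by (simp add: m_assoc inv_mult_group)
    also have "\<dots> = inv c \<otimes> (x \<otimes> z [^] i) \<otimes> c" using Suc unfolding z_def by simp
    also have "\<dots> = (inv c \<otimes> x \<otimes> c) \<otimes> (inv c \<otimes> z [^] i \<otimes> c)"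
      using cG xG ziG by (simp add: m_assoc)
    also have "inv c \<otimes> z [^] i \<otimes> c = z [^] i"
    proof -
      have "inv c \<otimes> z [^] i \<otimes> c = inv c \<otimes> (c \<otimes> z [^] i)" using comm cG ziG by (simp add: m_assoc)
      thus ?thesis using cG ziG by simp
    qed
    also have "(inv c \<otimes> x \<otimes> c) \<otimes> z [^] i = (x \<otimes> z) \<otimes> z [^] i" using cxc by simp
    also have "\<dots> = x \<otimes> z [^] Suc i" using xG zG nat_pow_Suc2[OF zG, of i] by (simp add: m_assoc del: nat_pow_Suc)
    finally show ?case unfolding z_def .
  qed
  interpret Pg: group "G\<lparr>carrier := P\<rparr>" using subgroup_imp_group[OF P] .
  have zN: "(inv x \<otimes> (inv c \<otimes> x \<otimes> c)) [^] N = \<one>" if x: "x \<in> P" for x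
  proof -
    have zP: "inv x \<otimes> (inv c \<otimes> x \<otimes> c) \<in> P" using zQ[OF x] QP by auto
    have "(inv x \<otimes> (inv c \<otimes> x \<otimes> c)) [^]\<^bsub>G\<lparr>carrier := P\<rparr>\<^esub> order (G\<lparr>carrier := P\<rparr>) = \<one>\<^bsub>G\<lparr>carrier := P\<rparr>\<^esub>"
      using Pg.pow_order_eq_1 zP by simp
    thus ?thesis using cardP nat_pow_consistent[of _ N P] unfolding order_def N_def by simp
  qed
  have wC: "c [^] N \<in> CGP" unfolding CGP_def centralizer_def
  proof (intro CollectI conjI ballI)
    show "c [^] N \<in> carrier G" using cG by simp
    fix x assume x: "x \<in> P"
    have xG: "x \<in> carrier G" using x PG by auto
    have e1: "inv (c [^] N) \<otimes> x \<otimes> c [^] N = x" using conjpow[OF x, of N] zN[OF x] xG by simp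
    have "c [^] N \<otimes> x = c [^] N \<otimes> (inv (c [^] N) \<otimes> x \<otimes> c [^] N)" using e1 by simp
    also have "\<dots> = x \<otimes> c [^] N" using cG xG by (simp add: m_assoc)
    finally show "c [^] N \<otimes> x = x \<otimes> c [^] N" .
  qed
  define n where "n = card (carrier G)"
  define m' where "m' = n div N"
  have n0: "n \<noteq> 0" unfolding n_def using fin by (simp add: carrier_not_empty)
  have pnu: "\<not> is_unit p" using pr by auto
  have nNm: "n = N * m'" unfolding m'_def N_def e_def n_def using multiplicity_dvd[of p "card (carrier G)"] by simp
  have "\<not> p dvd m'" unfolding m'_def N_def e_def n_def using multiplicity_decompose[OF _ pnu] n0 n_def by simp
  hence "coprime p m'" using prime_imp_coprime[OF pr] by simp
  hence cop: "coprime N m'" unfolding N_def by simp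
  have N0: "N \<noteq> 0" unfolding N_def using pr by (simp add: prime_gt_0_nat)
  obtain u v where uv: "N * u = m' * v + gcd N m'" using bezout_nat[OF N0] by blast
  hence uv1: "N * u = m' * v + 1" using cop by simp
  define w where "w = c [^] (N * u)"
  define y where "y = inv (c [^] (m' * v))"
  have wCGP: "w \<in> CGP" unfolding w_def using subgroup_pow_closed[OF CGP wC, of u] cG by (simp add: nat_pow_pow)
  have cyw: "c = y \<otimes> w"
  proof -
    have "w = c [^] (m' * v) \<otimes> c" unfolding w_def uv1 using cG nat_pow_mult[of c "m' * v" 1] by simp
    thus ?thesis unfolding y_def using cG by simp
  qed
  have yG: "y \<in> carrier G" unfolding y_def using cG by simp
  have cn: "c [^] n = \<one>" using pow_order_eq_1[OF cG] unfolding order_def n_def .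
  have yN: "y [^] N = \<one>"
  proof -
    have "(c [^] (m' * v)) [^] N = (c [^] n) [^] v" using cG nNm by (simp add: nat_pow_pow mult.commute mult.left_commute)
    hence "(c [^] (m' * v)) [^] N = \<one>" using cn by simp
    thus ?thesis unfolding y_def using nat_pow_inv[of "c [^] (m' * v)" N] cG by simp
  qed
  have yNP: "y \<in> normalizer G P" unfolding y_def
    using subgroup.m_inv_closed[OF NP subgroup_pow_closed[OF NP cN]] .
  define Zy where "Zy = generate G {y}"
  have Zy: "subgroup Zy G" unfolding Zy_def using generate_is_subgroup yG by simp
  have "ord y dvd p ^ e" using pow_eq_id[OF yG] yN unfolding N_def by simp
  hence "card Zy dvd p ^ e" unfolding Zy_def using generate_pow_card[OF yG] by simp
  then obtain s where cardZy: "card Zy = p ^ s" using divides_primepow_nat[OF pr] by auto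
  have ZyN: "Zy \<subseteq> normalizer G P" unfolding Zy_def using generate_subgroup_incl[OF _ NP] yNP by simp
  define M where "M = Zy <#> P"
  have M: "subgroup M G" unfolding M_def
  proof (rule prod_subgroup[OF Zy P])
    fix a b assume "a \<in> Zy" "b \<in> P"
    thus "a \<otimes> b \<otimes> inv a \<in> P" using normalizerD[OF PG] ZyN by auto
  qed
  have PM: "P \<subseteq> M" unfolding M_def set_mult_def using subgroup.one_closed[OF Zy] PG by force
  have ZyM: "Zy \<subseteq> M" unfolding M_def set_mult_def using subgroup.one_closed[OF P] subgroup.subset[OF Zy] by force
  have MN: "M \<subseteq> normalizer G P"
  proof
    fix k assume "k \<in> M"
    then obtain a b where a: "a \<in> Zy" and b: "b \<in> P" and k: "k = a \<otimes> b" unfolding M_def set_mult_def by auto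
    show "k \<in> normalizer G P" using subgroup.m_closed[OF NP] a ZyN P_norm_P[OF b] k by auto
  qed
  obtain t where tM: "t \<in> M" and tfix: "\<forall>z\<in>Zy. t \<otimes> z \<otimes> inv t \<in> P"
    using fixed_point_conj[OF fin pr M P PM cardP ndvd[OF M] Zy ZyM cardZy] by blast
  have tN: "t \<in> normalizer G P" using tM MN by auto
  have tG: "t \<in> carrier G" using normalizer_carrier[OF PG tN] .
  have yZ: "y \<in> Zy" unfolding Zy_def by (rule generate.incl) simp
  have "inv t \<otimes> (t \<otimes> y \<otimes> inv t) \<otimes> t \<in> P" using normalizerD'[OF PG tN] tfix yZ by blast
  hence yP: "y \<in> P" using tG yG by (simp add: m_assoc)
  show "c \<in> L" unfolding L_def set_mult_def using cyw yP wCGP by auto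
qed

lemma well_def: assumes n: "n \<in> NHP" and m: "m \<in> NHP" and eq: "K #> n = K #> m"
  shows "L #> n = L #> m"
proof -
  have nG: "n \<in> carrier G" and mG: "m \<in> carrier G" using n m NHPG by auto
  have zK: "n \<otimes> inv m \<in> K" using rcos_eq_iff[OF K nG mG] eq by simp
  have zN: "n \<otimes> inv m \<in> normalizer G P"
    using subgroup.m_closed[OF NP _ subgroup.m_inv_closed[OF NP]] n m unfolding NHP_def by auto
  obtain q c where q: "q \<in> Q" and c: "c \<in> CHQ" and z: "n \<otimes> inv m = q \<otimes> c"
    using zK unfolding K_def set_mult_def by auto
  have qG: "q \<in> carrier G" and cG: "c \<in> carrier G" using q c QG CHQG by auto
  have qP: "q \<in> P" using q QP by auto
  have "c = inv q \<otimes> (n \<otimes> inv m)" using z qG cG by simp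
  hence cN: "c \<in> normalizer G P"
    using subgroup.m_closed[OF NP subgroup.m_inv_closed[OF NP P_norm_P[OF qP]] zN] by simp
  have "c \<in> L" using KEY[OF c cN] .
  hence "n \<otimes> inv m \<in> L" using z subgroup.m_closed[OF L] qP P_L by auto
  thus ?thesis using rcos_eq_iff[OF L nG mG] by simp
qed


definition phi :: "'a set \<Rightarrow> 'a set" where
  "phi Y = L #> (SOME n. n \<in> NHP \<and> Y = K #> n)"

lemma phi_rep: assumes n: "n \<in> NHP" shows "phi (K #> n) = L #> n"
proof -
  have ex: "\<exists>m. m \<in> NHP \<and> K #> n = K #> m" using n by auto
  define m where "m = (SOME m. m \<in> NHP \<and> K #> n = K #> m)"
  have m: "m \<in> NHP \<and> K #> n = K #> m" unfolding m_def using someI_ex[OF ex] .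
  have "L #> m = L #> n" using well_def[of m n] m n by simp
  thus ?thesis unfolding phi_def m_def[symmetric] by simp
qed

lemma Mt_carrier: "carrier (G\<lparr>carrier := normalizer G P\<rparr> Mod L) = (\<lambda>g. L #> g) ` normalizer G P"
  using quot_carrier .

lemma NHP_NP: "NHP \<subseteq> normalizer G P" unfolding NHP_def by auto

lemma phi_hom: "phi \<in> hom ((G\<lparr>carrier := NHQ\<rparr> Mod K)\<lparr>carrier := (\<lambda>n. K #> n) ` NHP\<rparr>)
                        (G\<lparr>carrier := normalizer G P\<rparr> Mod L)"
proof (rule homI)
  fix Y assume "Y \<in> carrier ((G\<lparr>carrier := NHQ\<rparr> Mod K)\<lparr>carrier := (\<lambda>n. K #> n) ` NHP\<rparr>)"
  then obtain n where n: "n \<in> NHP" and Y: "Y = K #> n" by auto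
  show "phi Y \<in> carrier (G\<lparr>carrier := normalizer G P\<rparr> Mod L)"
    unfolding Mt_carrier Y phi_rep[OF n] using n NHP_NP by auto
next
  fix Y1 Y2 assume "Y1 \<in> carrier ((G\<lparr>carrier := NHQ\<rparr> Mod K)\<lparr>carrier := (\<lambda>n. K #> n) ` NHP\<rparr>)"
    "Y2 \<in> carrier ((G\<lparr>carrier := NHQ\<rparr> Mod K)\<lparr>carrier := (\<lambda>n. K #> n) ` NHP\<rparr>)"
  then obtain n1 n2 where n1: "n1 \<in> NHP" and Y1: "Y1 = K #> n1" and n2: "n2 \<in> NHP" and Y2: "Y2 = K #> n2" by auto
  have "Y1 \<otimes>\<^bsub>(G\<lparr>carrier := NHQ\<rparr> Mod K)\<lparr>carrier := (\<lambda>n. K #> n) ` NHP\<rparr>\<^esub> Y2 = K #> (n1 \<otimes> n2)"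
    using quot_mult[OF K_normal, of n1 n2] n1 n2 NHP_NHQ Y1 Y2 by auto
  hence "phi (Y1 \<otimes>\<^bsub>(G\<lparr>carrier := NHQ\<rparr> Mod K)\<lparr>carrier := (\<lambda>n. K #> n) ` NHP\<rparr>\<^esub> Y2) = L #> (n1 \<otimes> n2)"
    using phi_rep subgroup.m_closed[OF NHP n1 n2] by simp
  also have "\<dots> = (L #> n1) <#> (L #> n2)"
    using quot_mult[OF L_normal, of n1 n2] n1 n2 NHP_NP by auto
  finally show "phi (Y1 \<otimes>\<^bsub>(G\<lparr>carrier := NHQ\<rparr> Mod K)\<lparr>carrier := (\<lambda>n. K #> n) ` NHP\<rparr>\<^esub> Y2) =
       phi Y1 \<otimes>\<^bsub>G\<lparr>carrier := normalizer G P\<rparr> Mod L\<^esub> phi Y2"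
    using phi_rep n1 n2 Y1 Y2 by simp
qed

lemma phi_surj: "phi ` ((\<lambda>n. K #> n) ` NHP) = carrier (G\<lparr>carrier := normalizer G P\<rparr> Mod L)"
proof
  show "phi ` ((\<lambda>n. K #> n) ` NHP) \<subseteq> carrier (G\<lparr>carrier := normalizer G P\<rparr> Mod L)"
    using phi_rep NHP_NP unfolding Mt_carrier by auto
next
  show "carrier (G\<lparr>carrier := normalizer G P\<rparr> Mod L) \<subseteq> phi ` ((\<lambda>n. K #> n) ` NHP)"
  proof
    fix T assume "T \<in> carrier (G\<lparr>carrier := normalizer G P\<rparr> Mod L)"
    then obtain g where g: "g \<in> normalizer G P" and T: "T = L #> g" unfolding Mt_carrier by auto
    have gG: "g \<in> carrier G" using normalizer_carrier[OF PG g] .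
    then obtain x h where x: "x \<in> P" and h: "h \<in> H" and gxh: "g = x \<otimes> h"
      unfolding GPH set_mult_def by auto
    have xG: "x \<in> carrier G" and hG: "h \<in> carrier G" using x h PG HG by auto
    have "h = inv x \<otimes> g" using gxh xG hG by simp
    hence hN: "h \<in> normalizer G P"
      using subgroup.m_closed[OF NP subgroup.m_inv_closed[OF NP P_norm_P[OF x]] g] by simp
    have hNHP: "h \<in> NHP" unfolding NHP_def using hN h by auto
    have "g \<otimes> inv h = x" using gxh xG hG by (simp add: m_assoc)
    hence "L #> g = L #> h" using rcos_eq_iff[OF L gG hG] x P_L by auto
    hence "T = phi (K #> h)" using T phi_rep[OF hNHP] by simp
    thus "T \<in> phi ` ((\<lambda>n. K #> n) ` NHP)" using hNHP by auto
  qed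
qed

lemma Mq_pow: assumes n: "n \<in> NHQ"
  shows "(K #> n) [^]\<^bsub>G\<lparr>carrier := NHQ\<rparr> Mod K\<^esub> (i::nat) = K #> (n [^] i)"
proof (induction i)
  case 0 show ?case using coset_mult_one[OF KG] by simp
next
  case (Suc i)
  have ni: "n [^] i \<in> NHQ" using subgroup_pow_closed[OF NHQ n] .
  have "(K #> n) [^]\<^bsub>G\<lparr>carrier := NHQ\<rparr> Mod K\<^esub> Suc i = (K #> (n [^] i)) <#> (K #> n)"
    using Suc by simp
  also have "\<dots> = K #> (n [^] i \<otimes> n)" using quot_mult[OF K_normal ni n] .
  finally show ?case by simp
qed

lemma kernel_pgroup:
  "\<exists>k. card (kernel ((G\<lparr>carrier := NHQ\<rparr> Mod K)\<lparr>carrier := (\<lambda>n. K #> n) ` NHP\<rparr>)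
                     (G\<lparr>carrier := normalizer G P\<rparr> Mod L) phi) = p ^ k"
proof -
  let ?Mq = "G\<lparr>carrier := NHQ\<rparr> Mod K"
  let ?F = "?Mq\<lparr>carrier := (\<lambda>n. K #> n) ` NHP\<rparr>"
  let ?T = "G\<lparr>carrier := normalizer G P\<rparr> Mod L"
  let ?ker = "kernel ?F ?T phi"
  interpret Mq: group ?Mq using Mq_group .
  interpret F: group ?F using Mq.subgroup_imp_group[OF Fix_subgroup] .
  interpret hF: group_hom ?F ?T phi
    unfolding group_hom_def group_hom_axioms_def using F.is_group Mt_group phi_hom by auto
  have kerF: "subgroup ?ker ?F" using hF.subgroup_kernel .
  interpret Kr: group "?F\<lparr>carrier := ?ker\<rparr>" using F.subgroup_imp_group[OF kerF] .
  have finker: "finite (carrier (?F\<lparr>carrier := ?ker\<rparr>))"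
  proof -
    have "?ker \<subseteq> (\<lambda>n. K #> n) ` NHP" unfolding kernel_def by auto
    moreover have "finite ((\<lambda>n. K #> n) ` NHP)" using finite_sub[OF NHPG] by simp
    ultimately show ?thesis using finite_subset by auto
  qed
  have ex: "Y [^]\<^bsub>?F\<lparr>carrier := ?ker\<rparr>\<^esub> (p ^ e) = \<one>\<^bsub>?F\<lparr>carrier := ?ker\<rparr>\<^esub>"
    if Y: "Y \<in> carrier (?F\<lparr>carrier := ?ker\<rparr>)" for Y
  proof -
    have Yk: "Y \<in> ?ker" using Y by simp
    then obtain n where n: "n \<in> NHP" and Yn: "Y = K #> n" unfolding kernel_def by auto
    have "phi Y = L" using Yk unfolding kernel_def by simp
    hence Ln: "L #> n = L" using phi_rep[OF n] Yn by simp
    have nG: "n \<in> carrier G" using n NHPG by auto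
    have nH: "n \<in> H" using n unfolding NHP_def by auto
    have "n \<in> L #> n" using rcos_self[OF nG L] .
    hence nL: "n \<in> L" using Ln by simp
    then obtain x c where x: "x \<in> P" and c: "c \<in> CGP" and nxc: "n = x \<otimes> c" unfolding L_def set_mult_def by auto
    have xG: "x \<in> carrier G" and cG: "c \<in> carrier G" using x c PG CGPG by auto
    have comm: "x \<otimes> c = c \<otimes> x" using centralizerD[of c P x] c x unfolding CGP_def by simp
    interpret Pg: group "G\<lparr>carrier := P\<rparr>" using subgroup_imp_group[OF P] .
    have "x [^]\<^bsub>G\<lparr>carrier := P\<rparr>\<^esub> order (G\<lparr>carrier := P\<rparr>) = \<one>\<^bsub>G\<lparr>carrier := P\<rparr>\<^esub>"
      using Pg.pow_order_eq_1 x by simp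
    hence xN: "x [^] (p ^ e) = \<one>" using cardP nat_pow_consistent[of x "p ^ e" P] unfolding order_def by simp
    have "n [^] (p ^ e) = x [^] (p ^ e) \<otimes> c [^] (p ^ e)" using pow_mult_distrib[OF comm xG cG] nxc by simp
    hence nNc: "n [^] (p ^ e) = c [^] (p ^ e)" using xN cG by simp
    have "c [^] (p ^ e) \<in> centralizer G Q"
    proof -
      have "c [^] (p ^ e) \<in> centralizer G P" using subgroup_pow_closed[OF CGP c] unfolding CGP_def .
      thus ?thesis unfolding centralizer_def using QP by auto
    qed
    moreover have "n [^] (p ^ e) \<in> H" using subgroup_pow_closed[OF H nH] .
    ultimately have "n [^] (p ^ e) \<in> CHQ" unfolding CHQ_def using nNc by simp
    hence nK: "n [^] (p ^ e) \<in> K" using CHQ_K by auto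
    have "Y [^]\<^bsub>?Mq\<^esub> (p ^ e) = K #> (n [^] (p ^ e))" using Mq_pow[of n "p ^ e"] n NHP_NHQ Yn by auto
    also have "\<dots> = K" using coset_join2[OF _ K nK] nG by simp
    finally have "Y [^]\<^bsub>?Mq\<^esub> (p ^ e) = \<one>\<^bsub>?Mq\<^esub>" by simp
    moreover have "Y [^]\<^bsub>?F\<lparr>carrier := ?ker\<rparr>\<^esub> (p ^ e) = Y [^]\<^bsub>?Mq\<^esub> (p ^ e)"
      unfolding nat_pow_def by simp
    ultimately show ?thesis by simp
  qed
  have "\<exists>k. card (carrier (?F\<lparr>carrier := ?ker\<rparr>)) = p ^ k"
    using Kr.exponent_pgroup[OF finker pr ex] by blast
  thus ?thesis by simp
qed

lemma main:
  "subgroup ((\<lambda>n. K #> n) ` NHP) (G\<lparr>carrier := NHQ\<rparr> Mod K)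
   \<and> (\<lambda>n. K #> n) ` NHP = (\<lambda>n. K #> n) ` (NHP <#> CHQ)
   \<and> (\<exists>\<phi>. \<phi> \<in> hom ((G\<lparr>carrier := NHQ\<rparr> Mod K)\<lparr>carrier := (\<lambda>n. K #> n) ` NHP\<rparr>)
                  (G\<lparr>carrier := normalizer G P\<rparr> Mod L)
          \<and> \<phi> ` ((\<lambda>n. K #> n) ` NHP) = carrier (G\<lparr>carrier := normalizer G P\<rparr> Mod L)
          \<and> (\<forall>n\<in>NHP. \<phi> (K #> n) = L #> n)
          \<and> (\<exists>k. card (kernel ((G\<lparr>carrier := NHQ\<rparr> Mod K)\<lparr>carrier := (\<lambda>n. K #> n) ` NHP\<rparr>)
                            (G\<lparr>carrier := normalizer G P\<rparr> Mod L) \<phi>) = p ^ k))"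
  using Fix_subgroup image_NHP_CHQ phi_hom phi_surj phi_rep kernel_pgroup by metis

end

theorem lemma2p1:
  fixes G (structure) and p :: nat and P H :: "'a set"
  assumes "group G" and "finite (carrier G)"
    and "Factorial_Ring.prime p" and "odd p"
    and "sylow_subgroup G p P"
    and "H \<lhd> G"
    and "carrier G = P <#> H"
  defines "Q \<equiv> P \<inter> H"
  defines "NHQ \<equiv> normalizer G Q \<inter> H"
    and "CHQ \<equiv> centralizer G Q \<inter> H"
    and "NHP \<equiv> normalizer G P \<inter> H"
    and "CGP \<equiv> centralizer G P"
  defines "K \<equiv> Q <#> CHQ"
    and "L \<equiv> P <#> CGP"
  defines "Fix \<equiv> conj_fixed G P (carrier (G\<lparr>carrier := NHQ\<rparr> Mod K))"
  shows "subgroup Fix (G\<lparr>carrier := NHQ\<rparr> Mod K)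
       \<and> Fix = (\<lambda>n. K #> n) ` (NHP <#> CHQ)
       \<and> (\<exists>\<phi>. \<phi> \<in> hom ((G\<lparr>carrier := NHQ\<rparr> Mod K)\<lparr>carrier := Fix\<rparr>)
                     (G\<lparr>carrier := normalizer G P\<rparr> Mod L)
             \<and> \<phi> ` Fix = carrier (G\<lparr>carrier := normalizer G P\<rparr> Mod L)
             \<and> (\<forall>n\<in>NHP. \<phi> (K #> n) = L #> n)
             \<and> (\<exists>k. card (kernel ((G\<lparr>carrier := NHQ\<rparr> Mod K)\<lparr>carrier := Fix\<rparr>)
                               (G\<lparr>carrier := normalizer G P\<rparr> Mod L) \<phi>) = p ^ k))"
proof -
  have Psub: "subgroup P G" and cardP: "card P = p ^ multiplicity p (card (carrier G))"
    using assms(5) unfolding sylow_subgroup_def by auto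
  interpret X: L21 G p "multiplicity p (card (carrier G))" P H Q NHQ CHQ NHP CGP K L
  proof (intro L21.intro L21_axioms.intro)
    show "group G" by fact
  qed (use assms Psub cardP in \<open>simp_all add: Q_def NHQ_def CHQ_def NHP_def CGP_def K_def L_def\<close>)
  have FE: "Fix = (\<lambda>n. K #> n) ` NHP" unfolding Fix_def using X.Fix_eq .
  show ?thesis unfolding FE using X.main .
qed

end
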